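(* Let $L_1,L_2\in\mathcal{L}_{\mathrm{irr}}$ be irreducible subspaces of an arrangement $\mathcal{H}\subset\mathbb{CP}^n$ such that $L=L_1\cap L_2$ is non-empty and reducible. Then the irreducible components of $L$ are exactly $L_1$ and $L_2$; in particular $L_1+L_2=\mathbb{CP}^n$.
   Context: $\mathcal{H}$ is a finite set of distinct hyperplanes in $\mathbb{CP}^n$; $\mathcal{L}$ the set of non-empty proper intersections of members; $\mathcal{H}_L=\{H\in\mathcal{H}:L\subset H\}$. A splitting of an arrangement $\mathcal{K}$ is a decomposition $\mathcal{K}=\mathcal{K}_1\cup\mathcal{K}_2$ whose centres (intersections of members; $\mathbb{CP}^n$ for the empty collection) $T_1,T_2$ satisfy $T_1+T_2=\mathbb{CP}^n$ (projective span); non-trivial if both parts are non-empty; $\mathcal{K}$ is irreducible if no non-trivial splitting exists. $L\in\mathcal{L}$ is irreducible if $\mathcal{H}_L$ is irreducible, reducible otherwise; $\mathcal{L}_{\mathrm{irr}}$ is the set of irreducible elements. The irreducible components of $L\in\mathcal{L}$ are the inclusion-minimal elements of $\mathcal{L}_{\mathrm{irr}}$ containing $L$. *)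

theory Defs
  imports "HOL-Analysis.Analysis"
begin

text \<open>Model: CP^n is the projectivisation of V = complex^'n with CARD('n) = n+1.
Projective subspaces of CP^n correspond to complex-linear subspaces of V
(empty projective subspace = {0}, CP^n = UNIV).  Intersections correspond to
intersections, projective span T1 + T2 corresponds to the linear span of T1 \<union> T2.\<close>

type_synonym 'n cvec = "complex ^ 'n"

definition proj_hyperplane :: "'n::finite cvec set \<Rightarrow> bool" where
  "proj_hyperplane H \<longleftrightarrow> vec.subspace H \<and> vec.dim H = CARD('n) - 1"

definition centre :: "'n::finite cvec set set \<Rightarrow> 'n cvec set" where
  "centre K = \<Inter>K"

definition is_splitting :: "'n::finite cvec set set \<Rightarrow> 'n cvec set set \<Rightarrow> 'n cvec set set \<Rightarrow> bool" where
  "is_splitting K K1 K2 \<longleftrightarrow> K = K1 \<union> K2 \<and> vec.span (centre K1 \<union> centre K2) = UNIV"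

definition arr_irreducible :: "'n::finite cvec set set \<Rightarrow> bool" where
  "arr_irreducible K \<longleftrightarrow> \<not> (\<exists>K1 K2. K1 \<noteq> {} \<and> K2 \<noteq> {} \<and> is_splitting K K1 K2)"

definition intersections :: "'n::finite cvec set set \<Rightarrow> 'n cvec set set" where
  "intersections \<H> = {L. \<exists>S. S \<subseteq> \<H> \<and> S \<noteq> {} \<and> L = \<Inter>S \<and> L \<noteq> {0} \<and> L \<noteq> UNIV}"

definition hyps_containing :: "'n::finite cvec set set \<Rightarrow> 'n cvec set \<Rightarrow> 'n cvec set set" where
  "hyps_containing \<H> L = {H \<in> \<H>. L \<subseteq> H}"

definition irr_intersections :: "'n::finite cvec set set \<Rightarrow> 'n cvec set set" where
  "irr_intersections \<H> = {L \<in> intersections \<H>. arr_irreducible (hyps_containing \<H> L)}"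

definition irr_components :: "'n::finite cvec set set \<Rightarrow> 'n cvec set \<Rightarrow> 'n cvec set set" where
  "irr_components \<H> L = {M \<in> irr_intersections \<H>. L \<subseteq> M \<and>
      \<not> (\<exists>M' \<in> irr_intersections \<H>. L \<subseteq> M' \<and> M' \<subset> M)}"

end

theory Submission
  imports Defs
begin

lemma hyp_ne_UNIV:
  assumes "proj_hyperplane (H :: 'n::finite cvec set)"
  shows "H \<noteq> UNIV"
proof
  assume "H = UNIV"
  then have "vec.dim H = CARD('n)" using vec_dim_card by simp
  with assms show False unfolding proj_hyperplane_def
    by (metis One_nat_def Suc_pred diff_Suc_eq_diff_pred n_not_Suc_n zero_less_card_finite)
qed

lemma inter_sub:
  assumes "\<forall>H \<in> \<H>. proj_hyperplane (H :: 'n::finite cvec set)" "K \<subseteq> \<H>"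
  shows "vec.subspace (\<Inter>K)"
  using assms by (intro vec.subspace_Inter) (auto simp: proj_hyperplane_def)

lemma inter_hyps:
  assumes "M \<in> intersections \<H>"
  shows "\<Inter>(hyps_containing \<H> M) = M"
proof -
  obtain S where S: "S \<subseteq> \<H>" "S \<noteq> {}" "M = \<Inter>S" using assms unfolding intersections_def by blast
  have "S \<subseteq> hyps_containing \<H> M" using S unfolding hyps_containing_def by auto
  then have "\<Inter>(hyps_containing \<H> M) \<subseteq> M" using S(3) by auto
  moreover have "M \<subseteq> \<Inter>(hyps_containing \<H> M)" unfolding hyps_containing_def by auto
  ultimately show ?thesis by blast
qed

lemma split_side:
  assumes "arr_irreducible F" "F \<subseteq> K1 \<union> K2"
    and "vec.span (centre K1 \<union> centre K2) = (UNIV :: 'n::finite cvec set)"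
  shows "F \<subseteq> K1 \<or> F \<subseteq> K2"
proof (rule ccontr)
  assume nt: "\<not> (F \<subseteq> K1 \<or> F \<subseteq> K2)"
  have ne1: "F \<inter> K1 \<noteq> {}" using nt assms(2) by auto
  have ne2: "F \<inter> K2 \<noteq> {}" using nt assms(2) by auto
  have "centre K1 \<union> centre K2 \<subseteq> centre (F \<inter> K1) \<union> centre (F \<inter> K2)"
    unfolding centre_def by auto
  then have "vec.span (centre K1 \<union> centre K2) \<subseteq> vec.span (centre (F \<inter> K1) \<union> centre (F \<inter> K2))"
    by (rule vec.span_mono)
  then have spn: "vec.span (centre (F \<inter> K1) \<union> centre (F \<inter> K2)) = UNIV"
    using assms(3) by auto
  have feq: "F = (F \<inter> K1) \<union> (F \<inter> K2)" using assms(2) by auto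
  have sp: "is_splitting F (F \<inter> K1) (F \<inter> K2)" unfolding is_splitting_def by (intro conjI feq spn)
  have ex: "\<exists>A B. A \<noteq> {} \<and> B \<noteq> {} \<and> is_splitting F A B"
    by (rule exI[of _ "F \<inter> K1"], rule exI[of _ "F \<inter> K2"], intro conjI ne1 ne2 sp)
  have "\<not> (\<exists>A B. A \<noteq> {} \<and> B \<noteq> {} \<and> is_splitting F A B)"
    using assms(1) unfolding arr_irreducible_def .
  then show False using ex by (rule notE)
qed
lemma core:
  fixes \<H> :: "'n::finite cvec set set"
    and L1 L2 :: "'n cvec set"
  assumes hyp: "\<forall>H \<in> \<H>. proj_hyperplane H"
    and i1: "L1 \<in> irr_intersections \<H>"
    and i2: "L2 \<in> irr_intersections \<H>"
    and red: "\<not> arr_irreducible (hyps_containing \<H> (L1 \<inter> L2))"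
    and KK: "hyps_containing \<H> (L1 \<inter> L2) = K1 \<union> K2"
    and sp: "vec.span (\<Inter>K1 \<union> \<Inter>K2) = UNIV"
    and F1: "hyps_containing \<H> L1 \<subseteq> K1"
    and F2: "hyps_containing \<H> L2 \<subseteq> K2"
    and C: "\<forall>M \<in> irr_intersections \<H>. L1 \<inter> L2 \<subseteq> M \<longrightarrow>
              hyps_containing \<H> M \<subseteq> K1 \<or> hyps_containing \<H> M \<subseteq> K2"
  shows "irr_components \<H> (L1 \<inter> L2) = {L1, L2} \<and> vec.span (L1 \<union> L2) = UNIV"
proof -
  define L where "L = L1 \<inter> L2"
  have l1: "L1 \<in> intersections \<H>" and l2: "L2 \<in> intersections \<H>"
    using i1 i2 unfolding irr_intersections_def by auto
  have e1: "\<Inter>(hyps_containing \<H> L1) = L1" using inter_hyps[OF l1] .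
  have e2: "\<Inter>(hyps_containing \<H> L2) = L2" using inter_hyps[OF l2] .
  have T1L1: "\<Inter>K1 \<subseteq> L1" using F1 e1 by blast
  have T2L2: "\<Inter>K2 \<subseteq> L2" using F2 e2 by blast
  have K1H: "K1 \<subseteq> \<H>" and K2H: "K2 \<subseteq> \<H>" using KK unfolding hyps_containing_def by auto
  have LT1: "L \<subseteq> \<Inter>K1" and LT2: "L \<subseteq> \<Inter>K2"
    using KK unfolding hyps_containing_def L_def by auto
  have sT1: "vec.subspace (\<Inter>K1)" using inter_sub[OF hyp K1H] .
  have sT2: "vec.subspace (\<Inter>K2)" using inter_sub[OF hyp K2H] .
  have sL1: "vec.subspace L1" using inter_sub[OF hyp, of "hyps_containing \<H> L1"] e1
    unfolding hyps_containing_def by auto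
  have sL2: "vec.subspace L2" using inter_sub[OF hyp, of "hyps_containing \<H> L2"] e2
    unfolding hyps_containing_def by auto
  have dec: "\<exists>a b. a \<in> \<Inter>K1 \<and> b \<in> \<Inter>K2 \<and> x = a + b" for x
  proof -
    have "x \<in> vec.span (\<Inter>K1 \<union> \<Inter>K2)" using sp by simp
    moreover have "vec.span (\<Inter>K1) = \<Inter>K1" "vec.span (\<Inter>K2) = \<Inter>K2"
      using sT1 sT2 by (simp_all add: vec.span_eq_iff)
    ultimately have "x \<in> {a + b | a b. a \<in> \<Inter>K1 \<and> b \<in> \<Inter>K2}"
      unfolding vec.span_Un by simp
    then show ?thesis by blast
  qed
  have "L1 \<subseteq> \<Inter>K1"
  proof
    fix x assume x: "x \<in> L1"
    obtain a b where ab: "a \<in> \<Inter>K1" "b \<in> \<Inter>K2" "x = a + b" using dec by blast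
    have "b = x - a" using ab by simp
    then have "b \<in> L1" using vec.subspace_diff[OF sL1 x] ab(1) T1L1 by auto
    moreover have "b \<in> L2" using ab(2) T2L2 by auto
    ultimately have "b \<in> \<Inter>K1" using LT1 L_def by auto
    then show "x \<in> \<Inter>K1" using ab vec.subspace_add[OF sT1] by auto
  qed
  then have T1: "\<Inter>K1 = L1" using T1L1 by blast
  have "L2 \<subseteq> \<Inter>K2"
  proof
    fix x assume x: "x \<in> L2"
    obtain a b where ab: "a \<in> \<Inter>K1" "b \<in> \<Inter>K2" "x = a + b" using dec by blast
    have "a = x - b" using ab by simp
    then have "a \<in> L2" using vec.subspace_diff[OF sL2 x] ab(2) T2L2 by auto
    moreover have "a \<in> L1" using ab(1) T1L1 by auto
    ultimately have "a \<in> \<Inter>K2" using LT2 L_def by auto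
    then show "x \<in> \<Inter>K2" using ab vec.subspace_add[OF sT2] by auto
  qed
  then have T2: "\<Inter>K2 = L2" using T2L2 by blast
  have span: "vec.span (L1 \<union> L2) = UNIV" using sp T1 T2 by simp
  have cov: "L1 \<subseteq> M \<or> L2 \<subseteq> M" if "M \<in> irr_intersections \<H>" "L \<subseteq> M" for M
  proof -
    have "M \<in> intersections \<H>" using that unfolding irr_intersections_def by auto
    then have eM: "\<Inter>(hyps_containing \<H> M) = M" using inter_hyps by blast
    from C that L_def have "hyps_containing \<H> M \<subseteq> K1 \<or> hyps_containing \<H> M \<subseteq> K2" by blast
    then show ?thesis
    proof
      assume "hyps_containing \<H> M \<subseteq> K1"
      then have "\<Inter>K1 \<subseteq> M" using eM by blast
      then show ?thesis using T1 by blast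
    next
      assume "hyps_containing \<H> M \<subseteq> K2"
      then have "\<Inter>K2 \<subseteq> M" using eM by blast
      then show ?thesis using T2 by blast
    qed
  qed
  have irr1: "arr_irreducible (hyps_containing \<H> L1)"
    and irr2: "arr_irreducible (hyps_containing \<H> L2)"
    using i1 i2 unfolding irr_intersections_def by auto
  have n21: "\<not> L2 \<subseteq> L1"
  proof
    assume "L2 \<subseteq> L1" then have "L1 \<inter> L2 = L2" by blast
    then show False using red irr2 by simp
  qed
  have n12: "\<not> L1 \<subseteq> L2"
  proof
    assume "L1 \<subseteq> L2" then have "L1 \<inter> L2 = L1" by blast
    then show False using red irr1 by simp
  qed
  have "irr_components \<H> L = {L1, L2}"
  proof (rule set_eqI, rule iffI)
    fix M assume "M \<in> irr_components \<H> L"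
    then have M: "M \<in> irr_intersections \<H>" "L \<subseteq> M"
      "\<not> (\<exists>M' \<in> irr_intersections \<H>. L \<subseteq> M' \<and> M' \<subset> M)"
      unfolding irr_components_def by auto
    have "L \<subseteq> L1" "L \<subseteq> L2" using L_def by auto
    then show "M \<in> {L1, L2}" using cov[OF M(1,2)] M(3) i1 i2 by blast
  next
    fix M assume "M \<in> {L1, L2}"
    then show "M \<in> irr_components \<H> L"
    proof
      assume "M = L1"
      then show ?thesis unfolding irr_components_def using i1 L_def cov n21 by blast
    next
      assume "M \<in> {L2}"
      then show ?thesis unfolding irr_components_def using i2 L_def cov n12 by blast
    qed
  qed
  then show ?thesis using span L_def by simp
qed

theorem lemma2p14:
  fixes \<H> :: "'n::finite cvec set set"
    and L1 L2 :: "'n cvec set"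
  assumes "finite \<H>"
    and "\<forall>H \<in> \<H>. proj_hyperplane H"
    and "L1 \<in> irr_intersections \<H>"
    and "L2 \<in> irr_intersections \<H>"
    and "L1 \<inter> L2 \<in> intersections \<H>"
    and "\<not> arr_irreducible (hyps_containing \<H> (L1 \<inter> L2))"
  shows "irr_components \<H> (L1 \<inter> L2) = {L1, L2} \<and> vec.span (L1 \<union> L2) = UNIV"
proof -
  note hyp = assms(2) and i1 = assms(3) and i2 = assms(4) and red = assms(6)
  define L where "L = L1 \<inter> L2"
  obtain K1 K2 where K: "K1 \<noteq> {}" "K2 \<noteq> {}" "hyps_containing \<H> L = K1 \<union> K2"
    "vec.span (\<Inter>K1 \<union> \<Inter>K2) = UNIV"
    using red unfolding arr_irreducible_def is_splitting_def centre_def L_def by blast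
  have C: "\<forall>M \<in> irr_intersections \<H>. L \<subseteq> M \<longrightarrow>
              hyps_containing \<H> M \<subseteq> K1 \<or> hyps_containing \<H> M \<subseteq> K2"
  proof (intro ballI impI)
    fix M assume M: "M \<in> irr_intersections \<H>" "L \<subseteq> M"
    have "arr_irreducible (hyps_containing \<H> M)" using M unfolding irr_intersections_def by auto
    moreover have "hyps_containing \<H> M \<subseteq> K1 \<union> K2" using K(3) M(2)
      unfolding hyps_containing_def by blast
    ultimately show "hyps_containing \<H> M \<subseteq> K1 \<or> hyps_containing \<H> M \<subseteq> K2"
      using split_side K(4) unfolding centre_def by blast
  qed
  have K1H: "K1 \<subseteq> \<H>" and K2H: "K2 \<subseteq> \<H>" using K(3) unfolding hyps_containing_def by auto
  have l1: "L1 \<in> intersections \<H>" and l2: "L2 \<in> intersections \<H>"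
    using i1 i2 unfolding irr_intersections_def by auto
  have e1: "\<Inter>(hyps_containing \<H> L1) = L1" using inter_hyps[OF l1] .
  have e2: "\<Inter>(hyps_containing \<H> L2) = L2" using inter_hyps[OF l2] .
  have LT1: "L \<subseteq> \<Inter>K1" and LT2: "L \<subseteq> \<Inter>K2"
    using K(3) unfolding hyps_containing_def by auto
  have sT1: "vec.subspace (\<Inter>K1)" using inter_sub[OF hyp K1H] .
  have sT2: "vec.subspace (\<Inter>K2)" using inter_sub[OF hyp K2H] .
  have CL1: "hyps_containing \<H> L1 \<subseteq> K1 \<or> hyps_containing \<H> L1 \<subseteq> K2"
    using C i1 L_def by blast
  have CL2: "hyps_containing \<H> L2 \<subseteq> K1 \<or> hyps_containing \<H> L2 \<subseteq> K2"
    using C i2 L_def by blast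
  have nb1: False if "hyps_containing \<H> L1 \<subseteq> K1" "hyps_containing \<H> L2 \<subseteq> K1"
  proof -
    have "\<Inter>K1 \<subseteq> L" using that e1 e2 L_def by blast
    then have "\<Inter>K1 \<union> \<Inter>K2 = \<Inter>K2" using LT2 by blast
    then have "vec.span (\<Inter>K1 \<union> \<Inter>K2) = vec.span (\<Inter>K2)" by (rule arg_cong)
    then have "\<Inter>K2 = UNIV" using K(4) sT2 vec.span_eq_iff by metis
    moreover obtain H where "H \<in> K2" using K(2) by blast
    ultimately have "H = UNIV" by blast
    with \<open>H \<in> K2\<close> K2H hyp hyp_ne_UNIV show False by blast
  qed
  have nb2: False if "hyps_containing \<H> L1 \<subseteq> K2" "hyps_containing \<H> L2 \<subseteq> K2"
  proof -
    have "\<Inter>K2 \<subseteq> L" using that e1 e2 L_def by blast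
    then have "\<Inter>K1 \<union> \<Inter>K2 = \<Inter>K1" using LT1 by blast
    then have "vec.span (\<Inter>K1 \<union> \<Inter>K2) = vec.span (\<Inter>K1)" by (rule arg_cong)
    then have "\<Inter>K1 = UNIV" using K(4) sT1 vec.span_eq_iff by metis
    moreover obtain H where "H \<in> K1" using K(1) by blast
    ultimately have "H = UNIV" by blast
    with \<open>H \<in> K1\<close> K1H hyp hyp_ne_UNIV show False by blast
  qed
  show ?thesis
  proof (cases "hyps_containing \<H> L1 \<subseteq> K1")
    case True
    then have "hyps_containing \<H> L2 \<subseteq> K2" using CL2 nb1 by blast
    then show ?thesis using core[OF hyp i1 i2 red, of K1 K2] K True C L_def by blast
  next
    case False
    then have a: "hyps_containing \<H> L1 \<subseteq> K2" using CL1 by blast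
    then have b: "hyps_containing \<H> L2 \<subseteq> K1" using CL2 nb2 by blast
    have "hyps_containing \<H> (L1 \<inter> L2) = K2 \<union> K1" using K(3) L_def by blast
    moreover have "vec.span (\<Inter>K2 \<union> \<Inter>K1) = UNIV" using K(4) by (simp add: Un_commute)
    ultimately show ?thesis using core[OF hyp i1 i2 red, of K2 K1] a b C L_def by blast
  qed
qed


end
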